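(* For any activation pattern (any choice of diagonal $\{0,1\}$-matrices $R^{(\ell)}$ on the activation edges) and identity output activation $\phi = \mathrm{id}$, the restricted coboundary $\delta_\Omega$ is a square matrix with $\det \delta_\Omega = 1$. Consequently the restricted Laplacian satisfies \[ L_{\mathcal{F}_R}[\Omega,\Omega] = \delta_\Omega^T\, \delta_\Omega, \qquad \det L_{\mathcal{F}_R}[\Omega,\Omega] = 1, \] and in particular is positive definite.
   Context: Consider a feedforward ReLU network with $k$ hidden layers, layer widths $n_0,\dots,n_{k+1}$, weight matrices $W^{(\ell)}\in\mathbb{R}^{n_\ell\times n_{\ell-1}}$ and biases $b^{(\ell)}\in\mathbb{R}^{n_\ell}$. Define the extended weight matrix $\overline{W}^{(\ell)} = (W^{(\ell)}\mid \mathrm{diag}(b^{(\ell)}))$ and the extended activation $\overline{a}^{(\ell)} = (a^{(\ell)}, \mathbf{1}_{n_{\ell+1}})$, with $\overline{a}^{(0)}=\overline{\mathbf{x}}=(\mathbf{x},\mathbf{1}_{n_1})$. A cellular sheaf $\mathcal{F}$ is built on the path graph $v_x - v_{z^{(1)}} - v_{a^{(1)}} - v_{z^{(2)}} - \cdots - v_{a^{(k)}} - v_{z^{(k+1)}} - v_y$ (with $v_{a^{(0)}}\equiv v_x$), with stalks $\mathbb{R}^{n_0+n_1}$ at $v_x$, $\mathbb{R}^{n_\ell}$ at $v_{z^{(\ell)}}$, $\mathbb{R}^{n_\ell+n_{\ell+1}}$ at $v_{a^{(\ell)}}$, $\mathbb{R}^{n_{k+1}}$ at $v_y$. Writing $\mathcal{F}_{v,e}$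 for the restriction map from the stalk at vertex $v$ to the stalk at an incident edge $e$: on the weight edge $e_{z^{(\ell)}}$ (from $v_{a^{(\ell-1)}}$ to $v_{z^{(\ell)}}$, edge stalk $\mathbb{R}^{n_\ell}$) the maps are $\overline{W}^{(\ell)}$ and $I_{n_\ell}$; on the activation edge $e_{a^{(\ell)}}$ (from $v_{z^{(\ell)}}$ to $v_{a^{(\ell)}}$, edge stalk $\mathbb{R}^{n_\ell}$) they are a diagonal $0/1$ matrix $R^{(\ell)}$ and the projection $P_{n_\ell}=(I_{n_\ell}\ 0)$; on the output edge $e_y$ (from $v_{z^{(k+1)}}$ to $v_y$) they are $\phi$ and $I_{n_{k+1}}$. The coboundary is $(\delta x)_e = \mathcal{F}_{v,e}x_v - \mathcal{F}_{u,e}x_u$ for $e=u\to v$, and the sheaf Laplacian is $L=\delta^T\delta$. $\mathcal{F}_R$ denotes this sheaf with the activation pattern frozen at $R$. The fixed (boundary) coordinates $u$ are the whole input stalk at $v_x$ and the ones blocks $\mathbf{1}_{n_{\ell+1}}$ inside each $v_{a^{(\ell)}}$ stalk; the remaining free coordinates are $\omega=(z^{(1)},a^{(1)},\dots,a^{(k)},z^{(k+1)},\hat{y})$. Writing $\delta\overline{\omega}=\delta_\Omega\omega+\delta_U u$ for $\overline{\omega}=u\oplus\omega$, $\delta_\Omega$ is the restriction of the coboundary to the free coordinates and $L_{\mathcal{F}_R}[\Omega,\Omega]$ the corresponding block of the Laplacian. *)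

theory Defs
  imports "Jordan_Normal_Form.Determinant" "Jordan_Normal_Form.DL_Submatrix"
begin

text \<open>Path graph with vertices 0,...,m and edges i (i < m) oriented from vertex i to
  vertex i+1.  Vertex j has stalk of dimension dv j, edge i has stalk of dimension de i.
  Fs i is the restriction map from the stalk of the source vertex i to edge i,
  Ft i the restriction map from the stalk of the target vertex i+1 to edge i.
  The global 0-cochain (resp. 1-cochain) space is the concatenation of vertex (resp. edge)
  stalks in path order.\<close>

definition blk :: "real mat \<Rightarrow> nat \<Rightarrow> nat \<Rightarrow> nat \<times> nat \<Rightarrow> real" where
  "blk A r0 c0 rc = (case rc of (r, c) \<Rightarrow>
     if r0 \<le> r \<and> r < r0 + dim_row A \<and> c0 \<le> c \<and> c < c0 + dim_col A
     then A $$ (r - r0, c - c0) else 0)"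

definition path_coboundary ::
  "nat \<Rightarrow> (nat \<Rightarrow> nat) \<Rightarrow> (nat \<Rightarrow> nat) \<Rightarrow> (nat \<Rightarrow> real mat) \<Rightarrow> (nat \<Rightarrow> real mat) \<Rightarrow> real mat" where
  "path_coboundary m dv de Fs Ft =
     mat (\<Sum>i<m. de i) (\<Sum>j<Suc m. dv j)
       (\<lambda>rc. \<Sum>i<m. blk (Ft i) (\<Sum>p<i. de p) (\<Sum>q<Suc i. dv q) rc
                    - blk (Fs i) (\<Sum>p<i. de p) (\<Sum>q<i. dv q) rc)"

definition sheaf_laplacian :: "real mat \<Rightarrow> real mat" where
  "sheaf_laplacian \<delta> = transpose_mat \<delta> * \<delta>"

text \<open>Widths n 0, ..., n (k+1).  Vertices in path order (index j):
  0 = v_x, 2l-1 = v_z(l) (l = 1..k+1), 2l = v_a(l) (l = 1..k), 2k+2 = v_y.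
  Edges (index i, from vertex i to i+1):
  2(l-1) = weight edge e_z(l) (l = 1..k+1), 2l-1 = activation edge e_a(l) (l = 1..k),
  2k+1 = output edge e_y.\<close>

definition nn_vdim :: "nat \<Rightarrow> (nat \<Rightarrow> nat) \<Rightarrow> nat \<Rightarrow> nat" where
  "nn_vdim k n j =
     (if j = 0 then n 0 + n 1
      else if odd j then n ((j + 1) div 2)
      else if j = 2 * k + 2 then n (k + 1)
      else n (j div 2) + n (j div 2 + 1))"

definition nn_edim :: "nat \<Rightarrow> (nat \<Rightarrow> nat) \<Rightarrow> nat \<Rightarrow> nat" where
  "nn_edim k n i =
     (if even i then n (i div 2 + 1)
      else if i = 2 * k + 1 then n (k + 1)
      else n ((i + 1) div 2))"

definition ext_weight :: "real mat \<Rightarrow> real vec \<Rightarrow> real mat" where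
  "ext_weight W b = four_block_mat W (mat_diag (dim_vec b) (\<lambda>i. b $ i))
                      (0\<^sub>m 0 (dim_col W)) (0\<^sub>m 0 (dim_vec b))"

definition proj_mat :: "nat \<Rightarrow> nat \<Rightarrow> real mat" where
  "proj_mat p q = mat p (p + q) (\<lambda>(i, j). if i = j then 1 else 0)"

definition nn_src ::
  "nat \<Rightarrow> (nat \<Rightarrow> real mat) \<Rightarrow> (nat \<Rightarrow> real vec) \<Rightarrow> (nat \<Rightarrow> real mat) \<Rightarrow> real mat \<Rightarrow> nat \<Rightarrow> real mat" where
  "nn_src k W b R \<phi> i =
     (if even i then ext_weight (W (i div 2 + 1)) (b (i div 2 + 1))
      else if i = 2 * k + 1 then \<phi>
      else R ((i + 1) div 2))"

definition nn_tgt :: "nat \<Rightarrow> (nat \<Rightarrow> nat) \<Rightarrow> nat \<Rightarrow> real mat" where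
  "nn_tgt k n i =
     (if even i then 1\<^sub>m (n (i div 2 + 1))
      else if i = 2 * k + 1 then 1\<^sub>m (n (k + 1))
      else proj_mat (n ((i + 1) div 2)) (n ((i + 1) div 2 + 1)))"

definition nn_coboundary ::
  "nat \<Rightarrow> (nat \<Rightarrow> nat) \<Rightarrow> (nat \<Rightarrow> real mat) \<Rightarrow> (nat \<Rightarrow> real vec) \<Rightarrow> (nat \<Rightarrow> real mat) \<Rightarrow> real mat \<Rightarrow> real mat" where
  "nn_coboundary k n W b R \<phi> =
     path_coboundary (2 * k + 2) (nn_vdim k n) (nn_edim k n) (nn_src k W b R \<phi>) (nn_tgt k n)"

definition nn_voff :: "nat \<Rightarrow> (nat \<Rightarrow> nat) \<Rightarrow> nat \<Rightarrow> nat" where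
  "nn_voff k n j = (\<Sum>q<j. nn_vdim k n q)"

text \<open>Fixed (boundary) coordinates u: the whole input stalk at v_x, and the ones-block
  (last n_(l+1) coordinates) of each stalk at v_a(l), l = 1..k.\<close>
definition nn_fixed :: "nat \<Rightarrow> (nat \<Rightarrow> nat) \<Rightarrow> nat set" where
  "nn_fixed k n = {..< nn_vdim k n 0} \<union>
     (\<Union>l\<in>{1..k}. {nn_voff k n (2 * l) + n l ..< nn_voff k n (2 * l) + n l + n (l + 1)})"

text \<open>Free coordinates Omega = (z1, a1, ..., ak, z(k+1), yhat), in path order.\<close>
definition nn_free :: "nat \<Rightarrow> (nat \<Rightarrow> nat) \<Rightarrow> nat set" where
  "nn_free k n = {..< nn_voff k n (2 * k + 3)} - nn_fixed k n"

definition positive_definite_mat :: "real mat \<Rightarrow> bool" where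
  "positive_definite_mat A \<longleftrightarrow>
     A \<in> carrier_mat (dim_row A) (dim_row A) \<and> transpose_mat A = A \<and>
     (\<forall>x \<in> carrier_vec (dim_row A). x \<noteq> 0\<^sub>v (dim_row A) \<longrightarrow> x \<bullet> (A *\<^sub>v x) > 0)"

end

theory Submission
  imports Defs
begin


lemma sub_lap: "submatrix (transpose_mat A * A) I I = transpose_mat (submatrix A UNIV I) * submatrix A UNIV I"
proof (rule eq_matI)
  have c: "card {i. i < dim_row A \<and> i \<in> UNIV} = dim_row A" by simp
  show "dim_row (submatrix (transpose_mat A * A) I I) = dim_row (transpose_mat (submatrix A UNIV I) * submatrix A UNIV I)"
    by (simp add: dim_submatrix)
  show "dim_col (submatrix (transpose_mat A * A) I I) = dim_col (transpose_mat (submatrix A UNIV I) * submatrix A UNIV I)"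
    by (simp add: dim_submatrix)
  fix p q assume p: "p < dim_row (transpose_mat (submatrix A UNIV I) * submatrix A UNIV I)"
    and q: "q < dim_col (transpose_mat (submatrix A UNIV I) * submatrix A UNIV I)"
  have p': "p < card {j. j < dim_col A \<and> j \<in> I}" and q': "q < card {j. j < dim_col A \<and> j \<in> I}"
    using p q by (simp_all add: dim_submatrix)
  have pp: "pick I p < dim_col A" using pick_le p' by (simp add: conj_commute)
  have pq: "pick I q < dim_col A" using pick_le q' by (simp add: conj_commute)
  have "submatrix (transpose_mat A * A) I I $$ (p, q) = (transpose_mat A * A) $$ (pick I p, pick I q)"
    using p' q' by (intro submatrix_index) auto
  also have "\<dots> = (\<Sum>r<dim_row A. A $$ (r, pick I p) * A $$ (r, pick I q))"
    using pp pq by (simp add: scalar_prod_def atLeast0LessThan)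
  also have "\<dots> = (transpose_mat (submatrix A UNIV I) * submatrix A UNIV I) $$ (p, q)"
    using p' q' by (simp add: scalar_prod_def atLeast0LessThan dim_submatrix submatrix_index pick_UNIV)
  finally show "submatrix (transpose_mat A * A) I I $$ (p, q) = (transpose_mat (submatrix A UNIV I) * submatrix A UNIV I) $$ (p, q)" .
qed

lemma sprod_self_pos:
  fixes v :: "real vec"
  assumes "v \<in> carrier_vec n" "v \<noteq> 0\<^sub>v n"
  shows "v \<bullet> v > 0"
proof -
  obtain i where i: "i < n" "v $ i \<noteq> 0" using assms by (metis eq_vecI carrier_vecD index_zero_vec)
  have "v \<bullet> v = (\<Sum>j\<in>{0..<n}. v $ j * v $ j)" using assms by (simp add: scalar_prod_def)
  also have "\<dots> \<ge> v $ i * v $ i"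
    by (rule member_le_sum) (use i in auto)
  finally show ?thesis using i by (smt (verit) not_square_less_zero zero_less_mult_iff)
qed

lemma gram_pd:
  fixes B :: "real mat"
  assumes B: "B \<in> carrier_mat N N" and d: "det B \<noteq> 0"
  shows "positive_definite_mat (transpose_mat B * B)"
proof -
  have dr: "dim_row (transpose_mat B * B) = N" using B by simp
  show ?thesis unfolding positive_definite_mat_def dr
  proof (intro conjI ballI impI)
    show "transpose_mat B * B \<in> carrier_mat N N" using B by simp
    show "transpose_mat (transpose_mat B * B) = transpose_mat B * B"
      using B by (subst transpose_mult[of _ N N _ N]) auto
    fix x :: "real vec" assume x: "x \<in> carrier_vec N" "x \<noteq> 0\<^sub>v N"
    have Bx: "B *\<^sub>v x \<noteq> 0\<^sub>v N" using det_0_iff_vec_prod_zero[OF B] d x by blast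
    have "x \<bullet> ((transpose_mat B * B) *\<^sub>v x) = x \<bullet> (transpose_mat B *\<^sub>v (B *\<^sub>v x))"
      using B x by (subst assoc_mult_mat_vec[of _ N N _ N]) auto
    also have "\<dots> = (B *\<^sub>v x) \<bullet> (B *\<^sub>v x)"
      using transpose_vec_mult_scalar[of "transpose_mat B" N N "B *\<^sub>v x" x] B x
      by (simp add: comm_scalar_prod[of x N])
    finally show "x \<bullet> ((transpose_mat B * B) *\<^sub>v x) > 0"
      using sprod_self_pos[of "B *\<^sub>v x" N] Bx mult_mat_vec_carrier[OF B x(1)] by auto
  qed
qed



definition so :: "(nat \<Rightarrow> nat) \<Rightarrow> nat \<Rightarrow> nat" where
  "so d i = (\<Sum>q<i. d q)"

lemma so_0[simp]: "so d 0 = 0" by (simp add: so_def)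
lemma so_Suc: "so d (Suc i) = so d i + d i" by (simp add: so_def)
lemma so_mono: "i \<le> j \<Longrightarrow> so d i \<le> so d j"
  unfolding so_def by (rule sum_mono2) auto
lemma so_lt: "i < j \<Longrightarrow> so d i + d i \<le> so d j"
  using so_mono[of "Suc i" j d] by (simp add: so_Suc)

lemma so_decomp: "a < so d M \<Longrightarrow> \<exists>j<M. so d j \<le> a \<and> a < so d j + d j"
proof (induction M)
  case 0 then show ?case by simp
next
  case (Suc M)
  show ?case
  proof (cases "a < so d M")
    case True then show ?thesis using Suc.IH by (meson less_SucI)
  next
    case False then show ?thesis using Suc.prems by (auto simp: so_Suc intro!: exI[of _ M])
  qed
qed

lemma pc_entry:
  assumes Ft: "\<And>i. i<m \<Longrightarrow> Ft i \<in> carrier_mat (de i) (dv (Suc i))"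
    and Fs: "\<And>i. i<m \<Longrightarrow> Fs i \<in> carrier_mat (de i) (dv i)"
    and i: "i<m" "s < de i" and c: "c < so dv (Suc m)"
  shows "path_coboundary m dv de Fs Ft $$ (so de i + s, c) =
     blk (Ft i) (so de i) (so dv (Suc i)) (so de i + s, c) - blk (Fs i) (so de i) (so dv i) (so de i + s, c)"
proof -
  have r: "so de i + s < so de m" using so_lt[OF i(1), of de] i(2) by linarith
  let ?f = "\<lambda>j. blk (Ft j) (so de j) (so dv (Suc j)) (so de i + s, c) - blk (Fs j) (so de j) (so dv j) (so de i + s, c)"
  have z: "?f j = 0" if j: "j \<in> {..<m} - {i}" for j
  proof -
    have "\<not> (so de j \<le> so de i + s \<and> so de i + s < so de j + de j)"
    proof (cases "j < i")
      case True then show ?thesis using so_lt[OF True, of de] by linarith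
    next
      case False then have "i < j" using j by auto
      then show ?thesis using so_lt[of i j de] i by linarith
    qed
    then show ?thesis using Ft[of j] Fs[of j] j by (auto simp: blk_def)
  qed
  have "path_coboundary m dv de Fs Ft $$ (so de i + s, c) = (\<Sum>j<m. ?f j)"
    using r c unfolding path_coboundary_def so_def[symmetric] by simp
  also have "\<dots> = ?f i + (\<Sum>j\<in>{..<m} - {i}. ?f j)"
    using i by (subst sum.remove[of _ i]) auto
  also have "\<dots> = ?f i" using z by simp
  finally show ?thesis .
qed

lemma prod_list_ones: "(\<And>x. x \<in> set xs \<Longrightarrow> f x = (1::real)) \<Longrightarrow> prod_list (map f xs) = 1"
  by (induction xs) auto

lemma pc_det:
  assumes Ft: "\<And>i. i<m \<Longrightarrow> Ft i \<in> carrier_mat (de i) (dv (Suc i))"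
    and Fs: "\<And>i. i<m \<Longrightarrow> Fs i \<in> carrier_mat (de i) (dv i)"
    and le: "\<And>i. i<m \<Longrightarrow> de i \<le> dv (Suc i)"
    and idb: "\<And>i s s'. i<m \<Longrightarrow> s < de i \<Longrightarrow> s' < de i \<Longrightarrow> Ft i $$ (s, s') = (if s = s' then 1 else 0)"
    and Om: "\<Omega> = (\<Union>i<m. {so dv (Suc i) ..< so dv (Suc i) + de i})"
  shows "submatrix (path_coboundary m dv de Fs Ft) UNIV \<Omega> \<in> carrier_mat (so de m) (so de m)
       \<and> det (submatrix (path_coboundary m dv de Fs Ft) UNIV \<Omega>) = 1"
proof -
  define U where "U i = (\<Union>i'<i. {so dv (Suc i') ..< so dv (Suc i') + de i'})" for i
  have Ult: "a < so dv (Suc i)" if aU: "a \<in> U i" and im: "i \<le> m" for a i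
  proof -
    obtain i' where i': "i' < i" "a < so dv (Suc i') + de i'" using aU by (auto simp: U_def)
    have "so dv (Suc i') + de i' \<le> so dv (Suc i') + dv (Suc i')" using le[of i'] i' im by auto
    also have "\<dots> \<le> so dv (Suc i)" using so_lt[of "Suc i'" "Suc i" dv] i' by simp
    finally show ?thesis using i' by simp
  qed
  have cardU: "card (U i) = so de i" if "i \<le> m" for i
    using that
  proof (induction i)
    case 0 then show ?case by (simp add: U_def)
  next
    case (Suc i)
    have "U (Suc i) = U i \<union> {so dv (Suc i) ..< so dv (Suc i) + de i}"
      unfolding U_def by (auto simp: lessThan_Suc)
    moreover have "U i \<inter> {so dv (Suc i) ..< so dv (Suc i) + de i} = {}"
      using Ult[of _ i] Suc.prems by fastforce
    moreover have "finite (U i)" unfolding U_def by auto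
    ultimately show ?case using Suc by (simp add: card_Un_disjoint so_Suc)
  qed
  have inOm: "so dv (Suc i) + s \<in> \<Omega>" if "i < m" "s < de i" for i s
    unfolding Om using that by (intro UN_I[of i]) auto
  have OmU: "\<Omega> = U m" using Om U_def by simp
  have Omlt: "a < so dv (Suc m)" if "a \<in> \<Omega>" for a using Ult[of a m] that OmU by simp
  have seg: "{a \<in> \<Omega>. a < so dv (Suc i) + s} = U i \<union> {so dv (Suc i) ..< so dv (Suc i) + s}"
    if i: "i < m" "s \<le> de i" for i s
  proof (intro equalityI subsetI)
    fix a assume a: "a \<in> {a \<in> \<Omega>. a < so dv (Suc i) + s}"
    then obtain i' where i': "i' < m" "so dv (Suc i') \<le> a" "a < so dv (Suc i') + de i'" using Om by auto
    consider "i' < i" | "i' = i" | "i < i'" by linarith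
    then show "a \<in> U i \<union> {so dv (Suc i) ..< so dv (Suc i) + s}"
    proof cases
      case 1 then show ?thesis using i' unfolding U_def by auto
    next
      case 2 then show ?thesis using i' a by auto
    next
      case 3
      have "so dv (Suc i) + dv (Suc i) \<le> so dv (Suc i')" using so_lt[of "Suc i" "Suc i'" dv] 3 by simp
      then show ?thesis using i' a le[of i] i by auto
    qed
  next
    fix a assume a: "a \<in> U i \<union> {so dv (Suc i) ..< so dv (Suc i) + s}"
    then show "a \<in> {a \<in> \<Omega>. a < so dv (Suc i) + s}"
    proof
      assume "a \<in> U i"
      then have "a \<in> \<Omega>" "a < so dv (Suc i)" using Ult[of a i] i OmU unfolding U_def by auto
      then show ?thesis by auto
    next
      assume "a \<in> {so dv (Suc i) ..< so dv (Suc i) + s}"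
      then show ?thesis using inOm[of i "a - so dv (Suc i)"] i by auto
    qed
  qed
  have pk: "pick \<Omega> (so de i + s) = so dv (Suc i) + s" if i: "i < m" "s < de i" for i s
  proof -
    have inO: "so dv (Suc i) + s \<in> \<Omega>" using inOm i by auto
    have "card {a \<in> \<Omega>. a < so dv (Suc i) + s} = so de i + s"
    proof -
      have "U i \<inter> {so dv (Suc i) ..< so dv (Suc i) + s} = {}" using Ult[of _ i] i by fastforce
      moreover have "finite (U i)" unfolding U_def by auto
      ultimately show ?thesis using seg[of i s] i cardU[of i] by (simp add: card_Un_disjoint)
    qed
    then show ?thesis using pick_card_in_set[OF inO] by simp
  qed
  let ?d = "path_coboundary m dv de Fs Ft"
  let ?S = "submatrix ?d UNIV \<Omega>"
  have dr: "dim_row ?d = so de m" "dim_col ?d = so dv (Suc m)"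
    unfolding path_coboundary_def so_def by simp_all
  have colset: "{j. j < dim_col ?d \<and> j \<in> \<Omega>} = \<Omega>" using Omlt dr by auto
  have cardO: "card \<Omega> = so de m" using cardU[of m] OmU by simp
  have car: "?S \<in> carrier_mat (so de m) (so de m)"
    unfolding carrier_mat_def using dr colset cardO by (simp add: dim_submatrix)
  have ent: "?S $$ (p, q) = ?d $$ (p, pick \<Omega> q)" if "p < so de m" "q < so de m" for p q
    using that dr colset cardO by (intro submatrix_index[THEN trans]) (auto simp: pick_UNIV)
  have lt: "?S $$ (p, q) = 0" if pq: "p < q" "q < so de m" for p q
  proof -
    obtain i where i: "i < m" "so de i \<le> p" "p < so de i + de i" using so_decomp[of p de m] pq by auto
    obtain i' where i': "i' < m" "so de i' \<le> q" "q < so de i' + de i'" using so_decomp[of q de m] pq by auto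
    define s where "s = p - so de i"
    define s' where "s' = q - so de i'"
    have p: "p = so de i + s" and s: "s < de i" using i s_def by auto
    have q: "q = so de i' + s'" and s': "s' < de i'" using i' s'_def by auto
    have cO: "so dv (Suc i') + s' < so dv (Suc m)" using Omlt[OF inOm[OF i'(1) s']] by auto
    have "?S $$ (p, q) = ?d $$ (so de i + s, so dv (Suc i') + s')"
      using ent[of p q] pq pk[OF i'(1) s'] p q by simp
    also have "\<dots> = blk (Ft i) (so de i) (so dv (Suc i)) (so de i + s, so dv (Suc i') + s') - blk (Fs i) (so de i) (so dv i) (so de i + s, so dv (Suc i') + s')"
      by (rule pc_entry[OF Ft Fs i(1) s cO])
    also have "\<dots> = 0"
    proof -
      have ii: "i \<le> i'"
      proof (rule ccontr)
        assume "\<not> i \<le> i'" then have "i' < i" by simp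
        then show False using so_lt[of i' i de] p q pq s' by linarith
      qed
      have fs0: "blk (Fs i) (so de i) (so dv i) (so de i + s, so dv (Suc i') + s') = 0"
        using Fs[OF i(1)] so_mono[of "Suc i" "Suc i'" dv] ii by (auto simp: blk_def so_Suc)
      show ?thesis
      proof (cases "i = i'")
        case True
        then have "s < s'" using p q pq by simp
        then show ?thesis using fs0 True Ft[OF i(1)] idb[OF i(1) s] s' le[OF i(1)]
          by (auto simp: blk_def)
      next
        case False
        then have "i < i'" using ii by simp
        then have "so dv (Suc i) + dv (Suc i) \<le> so dv (Suc i')" using so_lt[of "Suc i" "Suc i'" dv] by simp
        then show ?thesis using fs0 Ft[OF i(1)] by (auto simp: blk_def)
      qed
    qed
    finally show ?thesis .
  qed
  have dg: "?S $$ (p, p) = 1" if p: "p < so de m" for p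
  proof -
    obtain i where i: "i < m" "so de i \<le> p" "p < so de i + de i" using so_decomp[of p de m] p by auto
    define s where "s = p - so de i"
    have p': "p = so de i + s" and s: "s < de i" using i s_def by auto
    have cO: "so dv (Suc i) + s < so dv (Suc m)" using Omlt[OF inOm[OF i(1) s]] by auto
    have "?S $$ (p, p) = ?d $$ (so de i + s, so dv (Suc i) + s)"
      using ent[of p p] p pk[OF i(1) s] p' by simp
    also have "\<dots> = blk (Ft i) (so de i) (so dv (Suc i)) (so de i + s, so dv (Suc i) + s) - blk (Fs i) (so de i) (so dv i) (so de i + s, so dv (Suc i) + s)"
      by (rule pc_entry[OF Ft Fs i(1) s cO])
    also have "\<dots> = 1"
      using Fs[OF i(1)] Ft[OF i(1)] idb[OF i(1) s s] s le[OF i(1)] by (auto simp: blk_def so_Suc)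
    finally show ?thesis .
  qed
  have "det ?S = prod_list (diag_mat ?S)"
    by (rule det_lower_triangular[OF _ car]) (rule lt)
  also have "\<dots> = 1" unfolding diag_mat_def
    by (rule prod_list_ones) (use car dg in auto)
  finally show ?thesis using car by simp
qed



lemma idx_cases:
  fixes i k :: nat
  assumes "i < 2 * k + 2"
  obtains (ev) t where "i = 2 * t" "t \<le> k"
    | (od) t where "i = 2 * t + 1" "t < k"
    | (last) "i = 2 * k + 1"
proof -
  obtain t :: nat where "i = 2 * t \<or> i = 2 * t + 1" by (metis oddE evenE)
  then show thesis using assms that by (cases "i = 2 * k + 1") auto
qed

lemma nn_dims:
  fixes k :: nat and n :: "nat \<Rightarrow> nat"
    and W :: "nat \<Rightarrow> real mat" and b :: "nat \<Rightarrow> real vec" and R :: "nat \<Rightarrow> real mat"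
  assumes W: "\<And>l. 1 \<le> l \<Longrightarrow> l \<le> k + 1 \<Longrightarrow> W l \<in> carrier_mat (n l) (n (l - 1))"
    and b: "\<And>l. 1 \<le> l \<Longrightarrow> l \<le> k + 1 \<Longrightarrow> b l \<in> carrier_vec (n l)"
    and R_dim: "\<And>l. 1 \<le> l \<Longrightarrow> l \<le> k \<Longrightarrow> R l \<in> carrier_mat (n l) (n l)"
    and i: "i < 2 * k + 2"
  shows "nn_tgt k n i \<in> carrier_mat (nn_edim k n i) (nn_vdim k n (Suc i))"
    "nn_src k W b R (1\<^sub>m (n (k + 1))) i \<in> carrier_mat (nn_edim k n i) (nn_vdim k n i)"
    "nn_edim k n i \<le> nn_vdim k n (Suc i)"
    "\<And>s s'. s < nn_edim k n i \<Longrightarrow> s' < nn_edim k n i \<Longrightarrow> nn_tgt k n i $$ (s, s') = (if s = s' then 1 else 0)"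
    "nn_edim k n i = nn_vdim k n (Suc i) \<or> (\<exists>t<k. i = 2 * t + 1 \<and> nn_edim k n i = n (t + 1)
        \<and> nn_vdim k n (Suc i) = n (t + 1) + n (t + 2))"
proof -
  have ew: "ext_weight (W l) (b l) \<in> carrier_mat (n l) (n (l - 1) + n l)" if "1 \<le> l" "l \<le> k + 1" for l
  proof -
    have "ext_weight (W l) (b l) \<in> carrier_mat (n l + 0) (n (l - 1) + n l)"
      unfolding ext_weight_def using W[OF that] b[OF that]
      by (intro four_block_carrier_mat) auto
    then show ?thesis by simp
  qed
  have all: "nn_tgt k n i \<in> carrier_mat (nn_edim k n i) (nn_vdim k n (Suc i)) \<and>
    nn_src k W b R (1\<^sub>m (n (k + 1))) i \<in> carrier_mat (nn_edim k n i) (nn_vdim k n i) \<and>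
    nn_edim k n i \<le> nn_vdim k n (Suc i) \<and>
    (\<forall>s s'. s < nn_edim k n i \<longrightarrow> s' < nn_edim k n i \<longrightarrow> nn_tgt k n i $$ (s, s') = (if s = s' then 1 else 0)) \<and>
    (nn_edim k n i = nn_vdim k n (Suc i) \<or> (\<exists>t<k. i = 2 * t + 1 \<and> nn_edim k n i = n (t + 1)
        \<and> nn_vdim k n (Suc i) = n (t + 1) + n (t + 2)))"
    using i
  proof (cases rule: idx_cases)
    case (ev t)
    have e: "ext_weight (W (t+1)) (b (t+1)) \<in> carrier_mat (n (t+1)) (n t + n (t+1))"
      using ew[of "t+1"] ev by simp
    show ?thesis using ev e
      by (auto simp: nn_tgt_def nn_src_def nn_edim_def nn_vdim_def)
  next
    case (od t)
    have r: "R (t+1) \<in> carrier_mat (n (t+1)) (n (t+1))" using R_dim[of "t+1"] od by simp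
    have d1: "(2 * t + 1 + 1) div 2 = t + 1" by simp
    have d2: "(2 * t + 2) div 2 = t + 1" by simp
    show ?thesis using od r
      by (auto simp: nn_tgt_def nn_src_def nn_edim_def nn_vdim_def proj_mat_def d1 d2)
  next
    case last
    show ?thesis using last
      by (auto simp: nn_tgt_def nn_src_def nn_edim_def nn_vdim_def)
  qed
  then show "nn_tgt k n i \<in> carrier_mat (nn_edim k n i) (nn_vdim k n (Suc i))"
    "nn_src k W b R (1\<^sub>m (n (k + 1))) i \<in> carrier_mat (nn_edim k n i) (nn_vdim k n i)"
    "nn_edim k n i \<le> nn_vdim k n (Suc i)"
    "\<And>s s'. s < nn_edim k n i \<Longrightarrow> s' < nn_edim k n i \<Longrightarrow> nn_tgt k n i $$ (s, s') = (if s = s' then 1 else 0)"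
    "nn_edim k n i = nn_vdim k n (Suc i) \<or> (\<exists>t<k. i = 2 * t + 1 \<and> nn_edim k n i = n (t + 1)
        \<and> nn_vdim k n (Suc i) = n (t + 1) + n (t + 2))"
    by blast+
qed

lemma vdim_a: "1 \<le> l \<Longrightarrow> l \<le> k \<Longrightarrow> nn_vdim k n (2 * l) = n l + n (l + 1)"
  by (auto simp: nn_vdim_def)

lemma edim_a: "1 \<le> l \<Longrightarrow> l \<le> k \<Longrightarrow> nn_edim k n (2 * l - 1) = n l"
proof -
  assume l: "1 \<le> l" "l \<le> k"
  then obtain t where t: "l = Suc t" by (cases l) auto
  have "2 * l - 1 = 2 * t + 1" using t by simp
  then show ?thesis using l t by (simp add: nn_edim_def)
qed

lemma free_eq:
  fixes k :: nat and n :: "nat \<Rightarrow> nat"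
  assumes le: "\<And>i. i < 2 * k + 2 \<Longrightarrow> nn_edim k n i \<le> nn_vdim k n (Suc i)"
    and alt: "\<And>i. i < 2 * k + 2 \<Longrightarrow> nn_edim k n i = nn_vdim k n (Suc i) \<or> (\<exists>t<k. i = 2 * t + 1 \<and> nn_edim k n i = n (t + 1)
        \<and> nn_vdim k n (Suc i) = n (t + 1) + n (t + 2))"
  shows "nn_free k n = (\<Union>i<2 * k + 2. {so (nn_vdim k n) (Suc i) ..< so (nn_vdim k n) (Suc i) + nn_edim k n i})"
proof -
  define dv where "dv = nn_vdim k n"
  define de where "de = nn_edim k n"
  have vo: "nn_voff k n = so dv" unfolding nn_voff_def so_def dv_def by auto
  have fr: "nn_free k n = {..< so dv (2 * k + 3)} -
     ({..< dv 0} \<union> (\<Union>l\<in>{1..k}. {so dv (2 * l) + n l ..< so dv (2 * l) + n l + n (l + 1)}))"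
    unfolding nn_free_def nn_fixed_def vo dv_def by simp
  show ?thesis unfolding fr dv_def[symmetric] de_def[symmetric]
  proof (intro equalityI subsetI)
    fix a assume "a \<in> (\<Union>i<2 * k + 2. {so dv (Suc i) ..< so dv (Suc i) + de i})"
    then obtain i where i: "i < 2 * k + 2" "so dv (Suc i) \<le> a" "a < so dv (Suc i) + de i" by auto
    have a1: "a < so dv (Suc (Suc i))" using le[OF i(1)] i by (simp add: so_Suc dv_def de_def)
    have "so dv (Suc (Suc i)) \<le> so dv (2 * k + 3)" using i(1) by (intro so_mono) simp
    then have A: "a < so dv (2 * k + 3)" using a1 by simp
    have B: "\<not> a < dv 0" using so_mono[of 1 "Suc i" dv] i by (simp add: so_Suc)
    have C: "a \<notin> {so dv (2 * l) + n l ..< so dv (2 * l) + n l + n (l + 1)}" if l: "1 \<le> l" "l \<le> k" for l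
    proof -
      consider "Suc i < 2 * l" | "Suc i = 2 * l" | "2 * l < Suc i" by linarith
      then show ?thesis
      proof cases
        case 1 then show ?thesis using so_mono[of "Suc (Suc i)" "2 * l" dv] a1 by simp
      next
        case 2
        then have "i = 2 * l - 1" by simp
        then have "de i = n l" using edim_a[OF l, of n] by (simp add: de_def)
        then show ?thesis using i 2 by simp
      next
        case 3
        then have "so dv (2 * l) + dv (2 * l) \<le> so dv (Suc i)" by (rule so_lt)
        then show ?thesis using vdim_a[OF l, of n] i by (simp add: dv_def)
      qed
    qed
    show "a \<in> {..< so dv (2 * k + 3)} -
     ({..< dv 0} \<union> (\<Union>l\<in>{1..k}. {so dv (2 * l) + n l ..< so dv (2 * l) + n l + n (l + 1)}))"
    proof (rule DiffI)
      show "a \<in> {..< so dv (2 * k + 3)}" using A by simp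
      show "a \<notin> {..< dv 0} \<union> (\<Union>l\<in>{1..k}. {so dv (2 * l) + n l ..< so dv (2 * l) + n l + n (l + 1)})"
      proof
        assume "a \<in> {..< dv 0} \<union> (\<Union>l\<in>{1..k}. {so dv (2 * l) + n l ..< so dv (2 * l) + n l + n (l + 1)})"
        then show False
        proof
          assume "a \<in> {..< dv 0}" then show False using B by simp
        next
          assume "a \<in> (\<Union>l\<in>{1..k}. {so dv (2 * l) + n l ..< so dv (2 * l) + n l + n (l + 1)})"
          then obtain l where "l \<in> {1..k}" "a \<in> {so dv (2 * l) + n l ..< so dv (2 * l) + n l + n (l + 1)}" by blast
          then show False using C by auto
        qed
      qed
    qed
  next
    fix a assume a: "a \<in> {..< so dv (2 * k + 3)} -
     ({..< dv 0} \<union> (\<Union>l\<in>{1..k}. {so dv (2 * l) + n l ..< so dv (2 * l) + n l + n (l + 1)}))"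
    have a1: "a < so dv (2 * k + 3)" using a by blast
    obtain j where j: "j < 2 * k + 3" "so dv j \<le> a" "a < so dv j + dv j" using so_decomp[OF a1] by blast
    have "j \<noteq> 0"
    proof
      assume "j = 0"
      then have "a < dv 0" using j(3) by simp
      then show False using a by blast
    qed
    then obtain i where ji: "j = Suc i" by (cases j) auto
    have i: "i < 2 * k + 2" using j ji by simp
    have "a < so dv (Suc i) + de i"
    proof (cases "de i = dv (Suc i)")
      case True then show ?thesis using j ji by simp
    next
      case False
      then obtain t where t: "t < k" "i = 2 * t + 1" "de i = n (t + 1)" "dv (Suc i) = n (t + 1) + n (t + 2)"
        using alt[OF i] by (auto simp: dv_def de_def)
      have l: "1 \<le> t + 1" "t + 1 \<le> k" using t by auto
      have j2: "j = 2 * (t + 1)" using t ji by simp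
      have nm: "a \<notin> (\<Union>l\<in>{1..k}. {so dv (2 * l) + n l ..< so dv (2 * l) + n l + n (l + 1)})"
        using a by blast
      have tk: "t + 1 \<in> {1..k}" using l by simp
      have "a \<notin> {so dv (2 * (t + 1)) + n (t + 1) ..< so dv (2 * (t + 1)) + n (t + 1) + n (t + 1 + 1)}"
        using nm tk by blast
      then have "a \<notin> {so dv j + n (t + 1) ..< so dv j + n (t + 1) + n (t + 2)}"
        by (simp add: j2)
      moreover have "a < so dv j + n (t + 1) + n (t + 2)" using j(3) t(4) ji by simp
      ultimately have "a < so dv j + n (t + 1)" by auto
      then show ?thesis using ji t(3) by simp
    qed
    moreover have "so dv (Suc i) \<le> a" using j ji by simp
    ultimately show "a \<in> (\<Union>i<2 * k + 2. {so dv (Suc i) ..< so dv (Suc i) + de i})"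
      using i by (intro UN_I[of i]) auto
  qed
qed



theorem lemma3p2:
  fixes k :: nat and n :: "nat \<Rightarrow> nat"
    and W :: "nat \<Rightarrow> real mat" and b :: "nat \<Rightarrow> real vec" and R :: "nat \<Rightarrow> real mat"
  assumes W: "\<And>l. 1 \<le> l \<Longrightarrow> l \<le> k + 1 \<Longrightarrow> W l \<in> carrier_mat (n l) (n (l - 1))"
    and b: "\<And>l. 1 \<le> l \<Longrightarrow> l \<le> k + 1 \<Longrightarrow> b l \<in> carrier_vec (n l)"
    and R_dim: "\<And>l. 1 \<le> l \<Longrightarrow> l \<le> k \<Longrightarrow> R l \<in> carrier_mat (n l) (n l)"
    and R_diag: "\<And>l i j. 1 \<le> l \<Longrightarrow> l \<le> k \<Longrightarrow> i < n l \<Longrightarrow> j < n l \<Longrightarrow> i \<noteq> j \<Longrightarrow> R l $$ (i, j) = 0"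
    and R_01: "\<And>l i. 1 \<le> l \<Longrightarrow> l \<le> k \<Longrightarrow> i < n l \<Longrightarrow> R l $$ (i, i) = 0 \<or> R l $$ (i, i) = 1"
  shows
    "let \<delta> = nn_coboundary k n W b R (1\<^sub>m (n (k + 1)));
         \<Omega> = nn_free k n;
         \<delta>\<Omega> = submatrix \<delta> UNIV \<Omega>;
         L\<Omega> = submatrix (sheaf_laplacian \<delta>) \<Omega> \<Omega>
     in dim_row \<delta>\<Omega> = dim_col \<delta>\<Omega> \<and> det \<delta>\<Omega> = 1 \<and>
        L\<Omega> = transpose_mat \<delta>\<Omega> * \<delta>\<Omega> \<and> det L\<Omega> = 1 \<and> positive_definite_mat L\<Omega>"
proof -
  note d = nn_dims[where k=k and n=n and W=W and b=b and R=R, OF W b R_dim]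
  define \<delta> where "\<delta> = nn_coboundary k n W b R (1\<^sub>m (n (k + 1)))"
  define S where "S = submatrix \<delta> UNIV (nn_free k n)"
  define N where "N = so (nn_edim k n) (2 * k + 2)"
  have fe: "nn_free k n = (\<Union>i<2 * k + 2. {so (nn_vdim k n) (Suc i) ..< so (nn_vdim k n) (Suc i) + nn_edim k n i})"
    by (rule free_eq) (use d in auto)
  have pc: "S \<in> carrier_mat N N \<and> det S = 1"
    unfolding S_def N_def \<delta>_def nn_coboundary_def
    by (rule pc_det[OF d(1) d(2) d(3) d(4) fe]) auto
  then have S: "S \<in> carrier_mat N N" and dS: "det S = 1" by auto
  have L: "submatrix (sheaf_laplacian \<delta>) (nn_free k n) (nn_free k n) = transpose_mat S * S"
    unfolding sheaf_laplacian_def S_def by (rule sub_lap)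
  have dL: "det (transpose_mat S * S) = 1"
    using S dS by (simp add: det_mult[of _ N] det_transpose)
  have pd: "positive_definite_mat (transpose_mat S * S)"
    using gram_pd[OF S] dS by simp
  show ?thesis
    unfolding Let_def \<delta>_def[symmetric] S_def[symmetric] L
    using S dS dL pd by simp
qed

end
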